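(* Let $X,Y$ be real-valued random variables on an atomless probability space (no integrability assumed). The following are equivalent: (i) $X\le^\dagger_{\rm cx} Y$; (ii) for all $p\in(0,1)$, $$\int_0^p F_X^{-1}(t)\,\mathrm dt \ge \int_0^p F_Y^{-1}(t)\,\mathrm dt \quad\text{and}\quad \int_p^1 F_X^{-1}(t)\,\mathrm dt \le \int_p^1 F_Y^{-1}(t)\,\mathrm dt,$$ where each of these inequalities between elements of $[-\infty,\infty]$ is considered true whenever it has the form $\infty\le x$ or $x\le-\infty$ for some $x\in[-\infty,\infty]$; (iii) for all $w\in\mathbb R$, $$\mathbb E[(X-w)_-]\le \mathbb E[(Y-w)_-]\quad\text{and}\quad \mathbb E[(X-w)_+]\le \mathbb E[(Y-w)_+],$$ with the same convention that an inequality of the form $\infty\le x$ or $x\le -\infty$, $x\in[-\infty,\infty]$, is considered true.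
   Context: For $x\in\mathbb R$, $x_+=\max\{x,0\}$, $x_-=\max\{-x,0\}$. $\mathcal U_{\rm cx}$ is the set of all convex functions $\mathbb R\to\mathbb R$. We write $X\le^\dagger_{\rm cx}Y$ (the "$^\dagger$convex order") if $\mathbb E[u(X)]\le \mathbb E[u(Y)]$ for all $u\in\mathcal U_{\rm cx}$ such that both expectations $\mathbb E[u(X)]$ and $\mathbb E[u(Y)]$ are finite. $F_X^{-1}(t)=\inf\{x\in\mathbb R:\mathbb P(X\le x)\ge t\}$, $t\in(0,1)$, is the left quantile function. *)

theory Defs
  imports "HOL-Probability.Probability"
begin

definition atomless :: "'a measure \<Rightarrow> bool" where
  "atomless M \<longleftrightarrow> (\<forall>A\<in>sets M. 0 < measure M A \<longrightarrow>
      (\<exists>B\<in>sets M. B \<subseteq> A \<and> 0 < measure M B \<and> measure M B < measure M A))"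

definition quantile :: "'a measure \<Rightarrow> ('a \<Rightarrow> real) \<Rightarrow> real \<Rightarrow> real" where
  "quantile M X t = Inf {x::real. t \<le> measure M {\<omega> \<in> space M. X \<omega> \<le> x}}"

text \<open>Extended-real valued integral: integral of positive part minus integral of
negative part (only used where at least one of them is finite).\<close>
definition ext_integral :: "'b measure \<Rightarrow> ('b \<Rightarrow> real) \<Rightarrow> ereal" where
  "ext_integral N f = enn2ereal (\<integral>\<^sup>+ x. ennreal (f x) \<partial>N) - enn2ereal (\<integral>\<^sup>+ x. ennreal (- f x) \<partial>N)"

definition conv_le :: "ereal \<Rightarrow> ereal \<Rightarrow> bool" where
  "conv_le a b \<longleftrightarrow> a = \<infinity> \<or> b = -\<infinity> \<or> a \<le> b"

definition dagger_cx :: "'a measure \<Rightarrow> ('a \<Rightarrow> real) \<Rightarrow> ('a \<Rightarrow> real) \<Rightarrow> bool" where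
  "dagger_cx M X Y \<longleftrightarrow> (\<forall>u::real \<Rightarrow> real. convex_on UNIV u \<longrightarrow>
      integrable M (\<lambda>\<omega>. u (X \<omega>)) \<longrightarrow> integrable M (\<lambda>\<omega>. u (Y \<omega>)) \<longrightarrow>
      (\<integral>\<omega>. u (X \<omega>) \<partial>M) \<le> (\<integral>\<omega>. u (Y \<omega>) \<partial>M))"

end

theory Submission
  imports Defs
begin

definition Tg :: "real \<Rightarrow> real \<Rightarrow> nat \<Rightarrow> real" where
  "Tg a h i = a + real i * h"

definition bs :: "(real \<Rightarrow> real) \<Rightarrow> real \<Rightarrow> real \<Rightarrow> nat \<Rightarrow> real" where
  "bs u a h i = (if i = 0 then 0 else (u (Tg a h i) - u (Tg a h (i - 1))) / h)"

definition Gs :: "(real \<Rightarrow> real) \<Rightarrow> real \<Rightarrow> real \<Rightarrow> nat \<Rightarrow> real \<Rightarrow> real" where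
  "Gs u a h N x = u a + (\<Sum>i\<in>{1..N}. (bs u a h i - bs u a h (i - 1)) * max (x - Tg a h i) 0)"

lemma slope_chain:
  fixes u :: "real \<Rightarrow> real"
  assumes "convex_on UNIV u" "x < t" "t < y"
  shows "(u t - u x) / (t - x) \<le> (u y - u t) / (y - t)"
proof -
  have "(u x - u t) / (x - t) \<le> (u x - u y) / (x - y)"
       "(u x - u y) / (x - y) \<le> (u t - u y) / (t - y)"
    using convex_on_slope_le[OF assms(1) _ _ assms(2,3)] by auto
  then have "(u x - u t) / (x - t) \<le> (u t - u y) / (t - y)" by linarith
  moreover have "(u x - u t) / (x - t) = (u t - u x) / (t - x)"
    by (metis minus_diff_eq minus_divide_divide)
  moreover have "(u t - u y) / (t - y) = (u y - u t) / (y - t)"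
    by (metis minus_diff_eq minus_divide_divide)
  ultimately show ?thesis by simp
qed

context
  fixes u :: "real \<Rightarrow> real" and a h :: real
  assumes cvx: "convex_on UNIV u" and mono: "mono u" and h: "0 < h"
begin

lemma Tg_Suc: "Tg a h (Suc i) = Tg a h i + h"
  unfolding Tg_def by (simp add: algebra_simps)

lemma bs_nonneg: "0 \<le> bs u a h i"
proof -
  have "u (Tg a h (i - 1)) \<le> u (Tg a h i)"
    using h by (intro monoD[OF mono]) (auto simp: Tg_def intro!: mult_right_mono)
  then show ?thesis unfolding bs_def using h by auto
qed

lemma bs_mono: "bs u a h (i - 1) \<le> bs u a h i"
proof (cases "i \<le> 1")
  case True
  then show ?thesis using bs_nonneg[of i] by (cases i) (auto simp: bs_def)
next
  case False
  define k where "k = i - 2"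
  have k: "i = Suc (Suc k)" using False by (simp add: k_def)
  have "(u (Tg a h (Suc k)) - u (Tg a h k)) / (Tg a h (Suc k) - Tg a h k)
        \<le> (u (Tg a h (Suc (Suc k))) - u (Tg a h (Suc k))) / (Tg a h (Suc (Suc k)) - Tg a h (Suc k))"
    using h by (intro slope_chain[OF cvx]) (auto simp: Tg_Suc)
  then show ?thesis unfolding k bs_def by (simp add: Tg_Suc)
qed

lemma Gs_Suc: "Gs u a h (Suc N) x = Gs u a h N x + (bs u a h (Suc N) - bs u a h N) * max (x - Tg a h (Suc N)) 0"
  unfolding Gs_def by simp

lemma Gs_eq: "Tg a h N \<le> x \<Longrightarrow> Gs u a h N x = u (Tg a h N) + bs u a h N * (x - Tg a h N - h)"
proof (induction N)
  case 0
  then show ?case by (simp add: Gs_def Tg_def bs_def)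
next
  case (Suc N)
  have x: "Tg a h N \<le> x" using Suc.prems h by (simp add: Tg_Suc)
  have bh: "bs u a h (Suc N) * h = u (Tg a h (Suc N)) - u (Tg a h N)"
    using h by (simp add: bs_def)
  have "Gs u a h (Suc N) x = u (Tg a h N) + bs u a h N * (x - Tg a h N - h)
          + (bs u a h (Suc N) - bs u a h N) * (x - Tg a h (Suc N))"
    using Suc.IH[OF x] Suc.prems by (simp add: Gs_Suc)
  also have "\<dots> = u (Tg a h (Suc N)) + bs u a h (Suc N) * (x - Tg a h (Suc N) - h)"
    using bh by (simp add: Tg_Suc algebra_simps)
  finally show ?case .
qed

lemma chord: "0 < N \<Longrightarrow> Tg a h N \<le> x \<Longrightarrow> bs u a h N * (x - Tg a h N) \<le> u x - u (Tg a h N)"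
proof (cases "x = Tg a h N")
  case False
  assume N: "0 < N" and x: "Tg a h N \<le> x"
  then have x': "Tg a h N < x" using False by simp
  obtain k where k: "N = Suc k" using N by (cases N) auto
  have "(u (Tg a h N) - u (Tg a h k)) / (Tg a h N - Tg a h k) \<le> (u x - u (Tg a h N)) / (x - Tg a h N)"
    using h x' by (intro slope_chain[OF cvx]) (auto simp: k Tg_Suc)
  then have "bs u a h N \<le> (u x - u (Tg a h N)) / (x - Tg a h N)"
    unfolding bs_def using k by (simp add: Tg_Suc)
  then show ?thesis using x' by (simp add: pos_le_divide_eq mult.commute)
qed simp

lemma K: "u (Tg a h N) - bs u a h N * h = u (max (Tg a h N - h) a)"
proof (cases N)
  case 0
  then show ?thesis using h by (simp add: bs_def Tg_def)
next
  case (Suc k)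
  have "Tg a h N - h = Tg a h k" by (simp add: Suc Tg_Suc)
  moreover have "a \<le> Tg a h k" using h by (simp add: Tg_def)
  ultimately show ?thesis using h by (simp add: bs_def Suc)
qed

lemma Gs_bounds:
  "(x \<le> Tg a h N \<longrightarrow> u (max (x - 2 * h) a) \<le> Gs u a h N x) \<and> Gs u a h N x \<le> u (max x a)"
proof (induction N arbitrary: x)
  case 0
  have "u a \<le> u (max x a)" by (intro monoD[OF mono]) simp
  moreover have "x \<le> a \<Longrightarrow> max (x - 2 * h) a = a" using h by simp
  ultimately show ?case by (simp add: Gs_def Tg_def)
next
  case (Suc N)
  show ?case
  proof (cases "x \<le> Tg a h N")
    case True
    then have "Gs u a h (Suc N) x = Gs u a h N x" using h by (simp add: Gs_Suc Tg_Suc)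
    then show ?thesis using Suc.IH[of x] True by simp
  next
    case False
    show ?thesis
    proof (cases "x \<le> Tg a h (Suc N)")
      case True
      have G: "Gs u a h (Suc N) x = u (Tg a h N) + bs u a h N * (x - Tg a h N - h)"
        using True False Gs_eq[of N x] by (simp add: Gs_Suc)
      have up: "Gs u a h (Suc N) x \<le> u (max x a)"
      proof -
        have "bs u a h N * (x - Tg a h N - h) \<le> 0"
          using True bs_nonneg[of N] by (intro mult_nonneg_nonpos) (auto simp: Tg_Suc)
        moreover have "u (Tg a h N) \<le> u (max x a)" using False by (intro monoD[OF mono]) auto
        ultimately show ?thesis using G by simp
      qed
      have lo: "u (max (x - 2 * h) a) \<le> Gs u a h (Suc N) x"
      proof -
        have "bs u a h N * (-h) \<le> bs u a h N * (x - Tg a h N - h)"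
          using False bs_nonneg[of N] by (intro mult_left_mono) auto
        then have "u (Tg a h N) - bs u a h N * h \<le> Gs u a h (Suc N) x" using G by simp
        moreover have "u (max (x - 2 * h) a) \<le> u (max (Tg a h N - h) a)"
          using True by (intro monoD[OF mono]) (auto simp: Tg_Suc)
        ultimately show ?thesis using K[of N] by simp
      qed
      show ?thesis using up lo by simp
    next
      case False2: False
      have G: "Gs u a h (Suc N) x = u (Tg a h (Suc N)) + bs u a h (Suc N) * (x - Tg a h (Suc N) - h)"
        using False2 Gs_eq[of "Suc N" x] by simp
      have "bs u a h (Suc N) * (x - Tg a h (Suc N) - h) \<le> bs u a h (Suc N) * (x - Tg a h (Suc N))"
        using bs_nonneg[of "Suc N"] h by (intro mult_left_mono) auto
      also have "\<dots> \<le> u x - u (Tg a h (Suc N))" using False2 by (intro chord) auto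
      finally have "Gs u a h (Suc N) x \<le> u x" using G by simp
      also have "u x \<le> u (max x a)" by (intro monoD[OF mono]) simp
      finally show ?thesis using False2 by simp
    qed
  qed
qed

lemma Gs_lower: "u a \<le> Gs u a h N x"
proof -
  have "0 \<le> (\<Sum>i\<in>{1..N}. (bs u a h i - bs u a h (i - 1)) * max (x - Tg a h i) 0)"
    using bs_mono by (intro sum_nonneg mult_nonneg_nonneg) auto
  then show ?thesis unfolding Gs_def by simp
qed

end


lemma convex_isCont:
  fixes u :: "real \<Rightarrow> real"
  assumes "convex_on UNIV u"
  shows "isCont u x"
proof -
  have "continuous_on UNIV u" using convex_on_continuous[OF open_UNIV assms] .
  then show ?thesis by (metis continuous_on_eq_continuous_at open_UNIV UNIV_I)
qed

lemma convex_meas: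
  fixes u :: "real \<Rightarrow> real"
  assumes "convex_on UNIV u"
  shows "u \<in> borel_measurable borel"
  using convex_on_continuous[OF open_UNIV assms] by (rule borel_measurable_continuous_onI)

lemma Gs_meas: "Gs u a h N \<in> borel_measurable borel"
  unfolding Gs_def by measurable

lemma Gs_lim:
  fixes u :: "real \<Rightarrow> real"
  assumes cvx: "convex_on UNIV u" and mono: "mono u"
  shows "(\<lambda>n. Gs u a (1 / real (Suc n)) ((Suc n)\<^sup>2) x) \<longlonglongrightarrow> u (max x a)"
proof (rule tendsto_sandwich)
  have h: "0 < 1 / real (Suc n)" for n by simp
  obtain n0 :: nat where n0: "x - a \<le> real n0" using real_arch_simple by blast
  show "\<forall>\<^sub>F n in sequentially. u (max (x - 2 * (1 / real (Suc n))) a) \<le> Gs u a (1 / real (Suc n)) ((Suc n)\<^sup>2) x"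
    unfolding eventually_sequentially
  proof (intro exI allI impI)
    fix n assume "n0 \<le> n"
    have e0: "m\<^sup>2 * (1 / m) = m" if "m \<noteq> 0" for m :: real
      using that by (simp add: power2_eq_square)
    have e: "real ((Suc n)\<^sup>2) * (1 / real (Suc n)) = real (Suc n)"
      unfolding of_nat_power by (rule e0) simp
    from \<open>n0 \<le> n\<close> have "x \<le> Tg a (1 / real (Suc n)) ((Suc n)\<^sup>2)"
      using n0 unfolding Tg_def e by simp
    then show "u (max (x - 2 * (1 / real (Suc n))) a) \<le> Gs u a (1 / real (Suc n)) ((Suc n)\<^sup>2) x"
      using Gs_bounds[OF cvx mono h] by blast
  qed
  show "\<forall>\<^sub>F n in sequentially. Gs u a (1 / real (Suc n)) ((Suc n)\<^sup>2) x \<le> u (max x a)"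
    using Gs_bounds[OF cvx mono h] by simp
  have "(\<lambda>n. 1 / real (Suc n)) \<longlonglongrightarrow> 0"
    using LIMSEQ_inverse_real_of_nat by (simp add: inverse_eq_divide)
  then have "(\<lambda>n. max (x - 2 * (1 / real (Suc n))) a) \<longlonglongrightarrow> max (x - 2 * 0) a"
    by (intro tendsto_intros)
  then show "(\<lambda>n. u (max (x - 2 * (1 / real (Suc n))) a)) \<longlonglongrightarrow> u (max x a)"
    using isCont_tendsto_compose[OF convex_isCont[OF cvx]] by fastforce
  show "(\<lambda>n. u (max x a)) \<longlonglongrightarrow> u (max x a)" by simp
qed

lemma int_lin:
  fixes f :: "'i \<Rightarrow> 'a \<Rightarrow> real"
  assumes "prob_space M" "finite I" "\<And>i. i \<in> I \<Longrightarrow> integrable M (f i)"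
  shows "(\<integral>\<omega>. k + (\<Sum>i\<in>I. c i * f i \<omega>) \<partial>M) = k + (\<Sum>i\<in>I. c i * (\<integral>\<omega>. f i \<omega> \<partial>M))"
proof -
  interpret prob_space M by fact
  have "(\<integral>\<omega>. k + (\<Sum>i\<in>I. c i * f i \<omega>) \<partial>M) = (\<integral>\<omega>. k \<partial>M) + (\<integral>\<omega>. (\<Sum>i\<in>I. c i * f i \<omega>) \<partial>M)"
    using assms by (intro Bochner_Integration.integral_add Bochner_Integration.integrable_sum) (auto intro!: Bochner_Integration.integrable_mult_right)
  also have "(\<integral>\<omega>. (\<Sum>i\<in>I. c i * f i \<omega>) \<partial>M) = (\<Sum>i\<in>I. (\<integral>\<omega>. c i * f i \<omega> \<partial>M))"
    using assms by (intro Bochner_Integration.integral_sum) auto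
  also have "\<dots> = (\<Sum>i\<in>I. c i * (\<integral>\<omega>. f i \<omega> \<partial>M))" by simp
  finally show ?thesis by (simp add: prob_space)
qed

lemma cx_trunc:
  fixes M :: "'a measure" and X Y :: "'a \<Rightarrow> real" and u :: "real \<Rightarrow> real"
  assumes P: "prob_space M" and mX: "X \<in> borel_measurable M" and mY: "Y \<in> borel_measurable M"
    and cvx: "convex_on UNIV u" and mono: "mono u"
    and iX: "\<And>t. integrable M (\<lambda>\<omega>. max (X \<omega> - t) 0)"
    and iY: "\<And>t. integrable M (\<lambda>\<omega>. max (Y \<omega> - t) 0)"
    and le: "\<And>t. (\<integral>\<omega>. max (X \<omega> - t) 0 \<partial>M) \<le> (\<integral>\<omega>. max (Y \<omega> - t) 0 \<partial>M)"
    and uX: "integrable M (\<lambda>\<omega>. u (X \<omega>))" and uY: "integrable M (\<lambda>\<omega>. u (Y \<omega>))"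
  shows "(\<integral>\<omega>. u (max (X \<omega>) a) \<partial>M) \<le> (\<integral>\<omega>. u (max (Y \<omega>) a) \<partial>M)"
proof -
  interpret prob_space M by fact
  have um[measurable]: "u \<in> borel_measurable borel" by (rule convex_meas[OF cvx])
  define hh where "hh n = 1 / real (Suc n)" for n
  define NN where "NN n = (Suc n)\<^sup>2" for n
  have hh: "0 < hh n" for n by (simp add: hh_def)
  have lim: "(\<lambda>n. \<integral>\<omega>. Gs u a (hh n) (NN n) (Z \<omega>) \<partial>M) \<longlonglongrightarrow> (\<integral>\<omega>. u (max (Z \<omega>) a) \<partial>M)"
    if mZ[measurable]: "Z \<in> borel_measurable M" and uZ: "integrable M (\<lambda>\<omega>. u (Z \<omega>))" for Z
  proof (rule integral_dominated_convergence[where w="\<lambda>\<omega>. \<bar>u a\<bar> + \<bar>u (max (Z \<omega>) a)\<bar>"])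
    show "(\<lambda>\<omega>. u (max (Z \<omega>) a)) \<in> borel_measurable M" by measurable
    show "(\<lambda>\<omega>. Gs u a (hh n) (NN n) (Z \<omega>)) \<in> borel_measurable M" for n
      using Gs_meas[of u a "hh n" "NN n"] by measurable
    have iZa: "integrable M (\<lambda>\<omega>. u (max (Z \<omega>) a))"
    proof (rule Bochner_Integration.integrable_bound[OF _ _ AE_I2])
      show "integrable M (\<lambda>\<omega>. \<bar>u (Z \<omega>)\<bar> + \<bar>u a\<bar>)" using uZ by auto
      show "(\<lambda>\<omega>. u (max (Z \<omega>) a)) \<in> borel_measurable M" by measurable
      show "norm (u (max (Z \<omega>) a)) \<le> norm (\<bar>u (Z \<omega>)\<bar> + \<bar>u a\<bar>)" for \<omega>
        by (cases "Z \<omega> \<le> a") (auto simp: max_def)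
    qed
    show "integrable M (\<lambda>\<omega>. \<bar>u a\<bar> + \<bar>u (max (Z \<omega>) a)\<bar>)" using iZa by auto
    show "AE \<omega> in M. (\<lambda>n. Gs u a (hh n) (NN n) (Z \<omega>)) \<longlonglongrightarrow> u (max (Z \<omega>) a)"
      unfolding hh_def NN_def using Gs_lim[OF cvx mono] by simp
    show "AE \<omega> in M. norm (Gs u a (hh n) (NN n) (Z \<omega>)) \<le> \<bar>u a\<bar> + \<bar>u (max (Z \<omega>) a)\<bar>" for n
    proof (intro AE_I2)
      fix \<omega>
      have "u a \<le> Gs u a (hh n) (NN n) (Z \<omega>)" using Gs_lower[OF cvx mono hh] .
      moreover have "Gs u a (hh n) (NN n) (Z \<omega>) \<le> u (max (Z \<omega>) a)" using Gs_bounds[OF cvx mono hh] by blast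
      ultimately show "norm (Gs u a (hh n) (NN n) (Z \<omega>)) \<le> \<bar>u a\<bar> + \<bar>u (max (Z \<omega>) a)\<bar>" by auto
    qed
  qed
  have step: "(\<integral>\<omega>. Gs u a (hh n) (NN n) (X \<omega>) \<partial>M) \<le> (\<integral>\<omega>. Gs u a (hh n) (NN n) (Y \<omega>) \<partial>M)" for n
  proof -
    let ?c = "\<lambda>i. bs u a (hh n) i - bs u a (hh n) (i - 1)"
    have "(\<integral>\<omega>. Gs u a (hh n) (NN n) (X \<omega>) \<partial>M) = u a + (\<Sum>i\<in>{1..NN n}. ?c i * (\<integral>\<omega>. max (X \<omega> - Tg a (hh n) i) 0 \<partial>M))"
      unfolding Gs_def using iX by (intro int_lin[OF P]) auto
    also have "\<dots> \<le> u a + (\<Sum>i\<in>{1..NN n}. ?c i * (\<integral>\<omega>. max (Y \<omega> - Tg a (hh n) i) 0 \<partial>M))"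
      using bs_mono[OF cvx mono hh] le by (intro add_left_mono sum_mono mult_left_mono) auto
    also have "\<dots> = (\<integral>\<omega>. Gs u a (hh n) (NN n) (Y \<omega>) \<partial>M)"
      unfolding Gs_def using iY by (intro int_lin[OF P, symmetric]) auto
    finally show ?thesis .
  qed
  show ?thesis
    using lim[OF mX uX] lim[OF mY uY] step by (intro LIMSEQ_le) auto
qed


lemma cx_mono:
  fixes M :: "'a measure" and X Y :: "'a \<Rightarrow> real" and u :: "real \<Rightarrow> real"
  assumes P: "prob_space M" and mX[measurable]: "X \<in> borel_measurable M" and mY[measurable]: "Y \<in> borel_measurable M"
    and cvx: "convex_on UNIV u" and mono: "mono u"
    and uX: "integrable M (\<lambda>\<omega>. u (X \<omega>))" and uY: "integrable M (\<lambda>\<omega>. u (Y \<omega>))"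
    and H: "\<And>w. (\<integral>\<^sup>+\<omega>. ennreal (max (X \<omega> - w) 0) \<partial>M) = \<top> \<or>
              (\<integral>\<^sup>+\<omega>. ennreal (max (X \<omega> - w) 0) \<partial>M) \<le> (\<integral>\<^sup>+\<omega>. ennreal (max (Y \<omega> - w) 0) \<partial>M)"
  shows "(\<integral>\<omega>. u (X \<omega>) \<partial>M) \<le> (\<integral>\<omega>. u (Y \<omega>) \<partial>M)"
proof -
  interpret prob_space M by fact
  have um[measurable]: "u \<in> borel_measurable borel" by (rule convex_meas[OF cvx])
  show ?thesis
  proof (cases "\<exists>x0 x1. x0 < x1 \<and> u x0 < u x1")
    case False
    have c: "u x = u 0" for x
    proof (cases x "0::real" rule: linorder_cases)
      case less
      then show ?thesis using False monoD[OF mono, of x 0] by force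
    next
      case greater
      then show ?thesis using False monoD[OF mono, of 0 x] by force
    qed simp
    have e1: "(\<lambda>\<omega>. u (X \<omega>)) = (\<lambda>\<omega>. u 0)" "(\<lambda>\<omega>. u (Y \<omega>)) = (\<lambda>\<omega>. u 0)"
      by (rule ext, rule c)+
    show ?thesis unfolding e1 by simp
  next
    case True
    then obtain x0 x1 where x01: "x0 < x1" "u x0 < u x1" by blast
    define c where "c = (u x1 - u x0) / (x1 - x0)"
    have c0: "0 < c" unfolding c_def using x01 by auto
    have bnd: "max (x - t) 0 \<le> (\<bar>u x\<bar> + \<bar>u x1\<bar>) / c + \<bar>x1 - t\<bar>" for x t
    proof (cases "x \<le> x1")
      case True
      have "0 \<le> (\<bar>u x\<bar> + \<bar>u x1\<bar>) / c" using c0 by simp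
      then show ?thesis using True by auto
    next
      case False
      have "c \<le> (u x - u x1) / (x - x1)" unfolding c_def
        using False x01 by (intro slope_chain[OF cvx]) auto
      then have "c * (x - x1) \<le> u x - u x1" using False by (simp add: le_divide_eq)
      then have "x - x1 \<le> (u x - u x1) / c" using c0 by (simp add: le_divide_eq mult.commute)
      also have "\<dots> \<le> (\<bar>u x\<bar> + \<bar>u x1\<bar>) / c" using c0 by (intro divide_right_mono) auto
      finally show ?thesis using c0 by auto
    qed
    have iZ: "integrable M (\<lambda>\<omega>. max (Z \<omega> - t) 0)"
      if [measurable]: "Z \<in> borel_measurable M" and uZ: "integrable M (\<lambda>\<omega>. u (Z \<omega>))" for Z t
    proof (rule Bochner_Integration.integrable_bound[OF _ _ AE_I2])
      show "integrable M (\<lambda>\<omega>. (\<bar>u (Z \<omega>)\<bar> + \<bar>u x1\<bar>) / c + \<bar>x1 - t\<bar>)"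
        using uZ by auto
      show "(\<lambda>\<omega>. max (Z \<omega> - t) 0) \<in> borel_measurable M" by measurable
      show "norm (max (Z \<omega> - t) 0) \<le> norm ((\<bar>u (Z \<omega>)\<bar> + \<bar>u x1\<bar>) / c + \<bar>x1 - t\<bar>)" for \<omega>
        using bnd[of "Z \<omega>" t] c0 by auto
    qed
    have iX: "\<And>t. integrable M (\<lambda>\<omega>. max (X \<omega> - t) 0)" using iZ[OF mX uX] .
    have iY: "\<And>t. integrable M (\<lambda>\<omega>. max (Y \<omega> - t) 0)" using iZ[OF mY uY] .
    have le: "(\<integral>\<omega>. max (X \<omega> - t) 0 \<partial>M) \<le> (\<integral>\<omega>. max (Y \<omega> - t) 0 \<partial>M)" for t
    proof -
      have eX: "(\<integral>\<^sup>+\<omega>. ennreal (max (X \<omega> - t) 0) \<partial>M) = ennreal (\<integral>\<omega>. max (X \<omega> - t) 0 \<partial>M)"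
        using iX by (intro nn_integral_eq_integral) auto
      have eY: "(\<integral>\<^sup>+\<omega>. ennreal (max (Y \<omega> - t) 0) \<partial>M) = ennreal (\<integral>\<omega>. max (Y \<omega> - t) 0 \<partial>M)"
        using iY by (intro nn_integral_eq_integral) auto
      have "ennreal (\<integral>\<omega>. max (X \<omega> - t) 0 \<partial>M) \<le> ennreal (\<integral>\<omega>. max (Y \<omega> - t) 0 \<partial>M)"
        using H[of t] unfolding eX eY by auto
      moreover have "0 \<le> (\<integral>\<omega>. max (Y \<omega> - t) 0 \<partial>M)" by (intro integral_nonneg_AE) auto
      ultimately show ?thesis by (simp add: ennreal_le_iff)
    qed
    have tr: "(\<integral>\<omega>. u (max (X \<omega>) a) \<partial>M) \<le> (\<integral>\<omega>. u (max (Y \<omega>) a) \<partial>M)" for a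
      by (rule cx_trunc[OF P mX mY cvx mono iX iY le uX uY])
    have lim: "(\<lambda>n. \<integral>\<omega>. u (max (Z \<omega>) (- real n)) \<partial>M) \<longlonglongrightarrow> (\<integral>\<omega>. u (Z \<omega>) \<partial>M)"
      if mZ[measurable]: "Z \<in> borel_measurable M" and uZ: "integrable M (\<lambda>\<omega>. u (Z \<omega>))" for Z
    proof (rule integral_dominated_convergence[where w="\<lambda>\<omega>. \<bar>u (Z \<omega>)\<bar> + \<bar>u 0\<bar>"])
      show "(\<lambda>\<omega>. u (Z \<omega>)) \<in> borel_measurable M" by measurable
      show "(\<lambda>\<omega>. u (max (Z \<omega>) (- real n))) \<in> borel_measurable M" for n by measurable
      show "integrable M (\<lambda>\<omega>. \<bar>u (Z \<omega>)\<bar> + \<bar>u 0\<bar>)" using uZ by auto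
      show "AE \<omega> in M. (\<lambda>n. u (max (Z \<omega>) (- real n))) \<longlonglongrightarrow> u (Z \<omega>)"
      proof (intro AE_I2 tendsto_eventually)
        fix \<omega>
        obtain n0 :: nat where n0: "- Z \<omega> \<le> real n0" using real_arch_simple by blast
        show "\<forall>\<^sub>F n in sequentially. u (max (Z \<omega>) (- real n)) = u (Z \<omega>)"
          unfolding eventually_sequentially
        proof (intro exI allI impI)
          fix n assume "n0 \<le> n"
          then have "- real n \<le> Z \<omega>" using n0 by linarith
          then show "u (max (Z \<omega>) (- real n)) = u (Z \<omega>)" by simp
        qed
      qed
      show "AE \<omega> in M. norm (u (max (Z \<omega>) (- real n))) \<le> \<bar>u (Z \<omega>)\<bar> + \<bar>u 0\<bar>" for n
      proof (intro AE_I2)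
        fix \<omega>
        have l: "u (Z \<omega>) \<le> u (max (Z \<omega>) (- real n))" by (intro monoD[OF mono]) simp
        have r: "u (max (Z \<omega>) (- real n)) \<le> u (max (Z \<omega>) 0)" by (intro monoD[OF mono]) auto
        have r2: "u (max (Z \<omega>) 0) \<le> \<bar>u (Z \<omega>)\<bar> + \<bar>u 0\<bar>" by (cases "Z \<omega> \<le> 0") (auto simp: max_def)
        show "norm (u (max (Z \<omega>) (- real n))) \<le> \<bar>u (Z \<omega>)\<bar> + \<bar>u 0\<bar>"
          using l r r2 abs_ge_minus_self[of "u (Z \<omega>)"] abs_ge_zero[of "u 0"]
          unfolding real_norm_def abs_le_iff by linarith
      qed
    qed
    show ?thesis
      using lim[OF mX uX] lim[OF mY uY] tr by (intro LIMSEQ_le) auto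
  qed
qed


lemma convex_reflect:
  fixes u :: "real \<Rightarrow> real"
  assumes "convex_on UNIV u"
  shows "convex_on UNIV (\<lambda>x. u (- x))"
proof (rule convex_onI)
  fix t x y :: real assume t: "0 < t" "t < 1"
  have "u ((1 - t) *\<^sub>R (-x) + t *\<^sub>R (-y)) \<le> (1 - t) * u (-x) + t * u (-y)"
    using convex_onD[OF assms, of t "-x" "-y"] t by simp
  then show "u (- ((1 - t) *\<^sub>R x + t *\<^sub>R y)) \<le> (1 - t) * u (- x) + t * u (- y)"
    by (simp add: algebra_simps)
qed simp

lemma cx_antimono:
  fixes M :: "'a measure" and X Y :: "'a \<Rightarrow> real" and u :: "real \<Rightarrow> real"
  assumes P: "prob_space M" and mX[measurable]: "X \<in> borel_measurable M" and mY[measurable]: "Y \<in> borel_measurable M"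
    and cvx: "convex_on UNIV u" and anti: "\<And>x y. x \<le> y \<Longrightarrow> u y \<le> u x"
    and uX: "integrable M (\<lambda>\<omega>. u (X \<omega>))" and uY: "integrable M (\<lambda>\<omega>. u (Y \<omega>))"
    and H: "\<And>w. (\<integral>\<^sup>+\<omega>. ennreal (max (- (X \<omega> - w)) 0) \<partial>M) = \<top> \<or>
              (\<integral>\<^sup>+\<omega>. ennreal (max (- (X \<omega> - w)) 0) \<partial>M) \<le> (\<integral>\<^sup>+\<omega>. ennreal (max (- (Y \<omega> - w)) 0) \<partial>M)"
  shows "(\<integral>\<omega>. u (X \<omega>) \<partial>M) \<le> (\<integral>\<omega>. u (Y \<omega>) \<partial>M)"
proof -
  define X' where "X' \<omega> = - X \<omega>" for \<omega>
  define Y' where "Y' \<omega> = - Y \<omega>" for \<omega>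
  define v where "v x = u (- x)" for x
  have mX': "X' \<in> borel_measurable M" unfolding X'_def by measurable
  have mY': "Y' \<in> borel_measurable M" unfolding Y'_def by measurable
  have c': "convex_on UNIV v" unfolding v_def by (rule convex_reflect[OF cvx])
  have mo': "mono v" unfolding v_def mono_def
  proof (intro allI impI)
    fix x y :: real assume "x \<le> y"
    then show "u (- x) \<le> u (- y)" by (intro anti) simp
  qed
  have vX: "(\<lambda>\<omega>. v (X' \<omega>)) = (\<lambda>\<omega>. u (X \<omega>))" "(\<lambda>\<omega>. v (Y' \<omega>)) = (\<lambda>\<omega>. u (Y \<omega>))"
    unfolding v_def X'_def Y'_def by simp_all
  have iX': "integrable M (\<lambda>\<omega>. v (X' \<omega>))" "integrable M (\<lambda>\<omega>. v (Y' \<omega>))"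
    unfolding vX using uX uY by simp_all
  have eX: "max (X' \<omega> - w) 0 = max (- (X \<omega> - (- w))) 0" for \<omega> w unfolding X'_def by simp
  have eY: "max (Y' \<omega> - w) 0 = max (- (Y \<omega> - (- w))) 0" for \<omega> w unfolding Y'_def by simp
  have H': "(\<integral>\<^sup>+\<omega>. ennreal (max (X' \<omega> - w) 0) \<partial>M) = \<top> \<or>
          (\<integral>\<^sup>+\<omega>. ennreal (max (X' \<omega> - w) 0) \<partial>M) \<le> (\<integral>\<^sup>+\<omega>. ennreal (max (Y' \<omega> - w) 0) \<partial>M)" for w
    unfolding eX eY by (rule H)
  have "(\<integral>\<omega>. v (X' \<omega>) \<partial>M) \<le> (\<integral>\<omega>. v (Y' \<omega>) \<partial>M)"
    by (rule cx_mono[OF P mX' mY' c' mo' iX' H'])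
  then show ?thesis unfolding vX .
qed

lemma convex_minimizer:
  fixes u :: "real \<Rightarrow> real"
  assumes cvx: "convex_on UNIV u" and nm: "\<not> mono u" and na: "\<not> (\<forall>x y. x \<le> y \<longrightarrow> u y \<le> u x)"
  shows "\<exists>m. \<forall>z. u m \<le> u z"
proof -
  obtain x y where xy: "x \<le> y" "u y < u x" using nm unfolding mono_def by (auto simp: not_le)
  then have xy': "x < y" by (cases "x = y") auto
  obtain x' y' where xy2: "x' \<le> y'" "u x' < u y'" using na by (auto simp: not_le)
  then have xy2': "x' < y'" by (cases "x' = y'") auto
  let ?S = "{min x x' .. max y y'}"
  have "\<exists>m\<in>?S. \<forall>z\<in>?S. u m \<le> u z"
  proof (rule continuous_attains_inf)
    show "continuous_on ?S u"
      using convex_on_continuous[OF open_UNIV cvx] by (rule continuous_on_subset) simp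
  qed (use xy' in auto)
  then obtain m where m: "m \<in> ?S" "\<And>z. z \<in> ?S \<Longrightarrow> u m \<le> u z" by blast
  have "u m \<le> u z" for z
  proof (cases "z \<in> ?S")
    case True then show ?thesis using m by blast
  next
    case False
    then consider "z > max y y'" | "z < min x x'" by fastforce
    then show ?thesis
    proof cases
      case 1
      have "(u y' - u x') / (y' - x') \<le> (u z - u y') / (z - y')"
        using 1 xy2' by (intro slope_chain[OF cvx]) auto
      moreover have "0 < (u y' - u x') / (y' - x')" using xy2 xy2' by simp
      ultimately have "0 < (u z - u y') / (z - y')" by linarith
      then have "u y' < u z" using 1 by (simp add: zero_less_divide_iff)
      moreover have "u m \<le> u y'" using m(2)[of y'] xy' xy2' by auto
      ultimately show ?thesis by simp
    next
      case 2
      have "(u x - u z) / (x - z) \<le> (u y - u x) / (y - x)"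
        using 2 xy' by (intro slope_chain[OF cvx]) auto
      moreover have "(u y - u x) / (y - x) < 0" using xy xy' by (simp add: divide_neg_pos)
      ultimately have "(u x - u z) / (x - z) < 0" by linarith
      then have "u x < u z" using 2 by (simp add: divide_less_0_iff)
      moreover have "u m \<le> u x" using m(2)[of x] xy' xy2' by auto
      ultimately show ?thesis by simp
    qed
  qed
  then show ?thesis by blast
qed

lemma cx_general:
  fixes M :: "'a measure" and X Y :: "'a \<Rightarrow> real" and u :: "real \<Rightarrow> real"
  assumes P: "prob_space M" and mX[measurable]: "X \<in> borel_measurable M" and mY[measurable]: "Y \<in> borel_measurable M"
    and cvx: "convex_on UNIV u"
    and uX: "integrable M (\<lambda>\<omega>. u (X \<omega>))" and uY: "integrable M (\<lambda>\<omega>. u (Y \<omega>))"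
    and Hp: "\<And>w. (\<integral>\<^sup>+\<omega>. ennreal (max (X \<omega> - w) 0) \<partial>M) = \<top> \<or>
              (\<integral>\<^sup>+\<omega>. ennreal (max (X \<omega> - w) 0) \<partial>M) \<le> (\<integral>\<^sup>+\<omega>. ennreal (max (Y \<omega> - w) 0) \<partial>M)"
    and Hm: "\<And>w. (\<integral>\<^sup>+\<omega>. ennreal (max (- (X \<omega> - w)) 0) \<partial>M) = \<top> \<or>
              (\<integral>\<^sup>+\<omega>. ennreal (max (- (X \<omega> - w)) 0) \<partial>M) \<le> (\<integral>\<^sup>+\<omega>. ennreal (max (- (Y \<omega> - w)) 0) \<partial>M)"
  shows "(\<integral>\<omega>. u (X \<omega>) \<partial>M) \<le> (\<integral>\<omega>. u (Y \<omega>) \<partial>M)"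
proof -
  interpret prob_space M by fact
  have um[measurable]: "u \<in> borel_measurable borel" by (rule convex_meas[OF cvx])
  show ?thesis
  proof (cases "mono u")
    case True
    then show ?thesis using cx_mono[OF P mX mY cvx True uX uY Hp] by blast
  next
    case nm: False
    show ?thesis
    proof (cases "\<forall>x y. x \<le> y \<longrightarrow> u y \<le> u x")
      case True
      then show ?thesis using cx_antimono[OF P mX mY cvx _ uX uY Hm] by blast
    next
      case na: False
      obtain m where m: "\<And>z. u m \<le> u z" using convex_minimizer[OF cvx nm na] by blast
      have up: "u s \<le> u t" if "m \<le> s" "s \<le> t" for s t
      proof (cases "m < s \<and> s < t")
        case True
        have "(u s - u m) / (s - m) \<le> (u t - u s) / (t - s)"
          using True by (intro slope_chain[OF cvx]) auto
        moreover have "0 \<le> (u s - u m) / (s - m)" using m[of s] True by simp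
        ultimately have "0 \<le> (u t - u s) / (t - s)" by linarith
        then show ?thesis using True by (simp add: zero_le_divide_iff)
      next
        case False
        then have "s = m \<or> s = t" using that by auto
        then show ?thesis using m[of t] by auto
      qed
      have down: "u t \<le> u s" if "s \<le> t" "t \<le> m" for s t
      proof (cases "s < t \<and> t < m")
        case True
        have "(u t - u s) / (t - s) \<le> (u m - u t) / (m - t)"
          using True by (intro slope_chain[OF cvx]) auto
        moreover have "(u m - u t) / (m - t) \<le> 0" using m[of t] True by (simp add: divide_nonpos_pos)
        ultimately have "(u t - u s) / (t - s) \<le> 0" by linarith
        then show ?thesis using True by (simp add: divide_le_0_iff)
      next
        case False
        then have "s = t \<or> t = m" using that by auto
        then show ?thesis using m[of s] by auto
      qed
      define u1 where "u1 x = u (max x m)" for x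
      define u2 where "u2 x = u (min x m)" for x
      have u1m[measurable]: "u1 \<in> borel_measurable borel" unfolding u1_def by measurable
      have u2m[measurable]: "u2 \<in> borel_measurable borel" unfolding u2_def by measurable
      have split: "u x = u1 x + u2 x - u m" for x
        unfolding u1_def u2_def by (cases "x \<le> m") (auto simp: max_def min_def)
      have c1: "convex_on UNIV u1" unfolding u1_def
      proof (rule convex_onI)
        fix t x y :: real assume t: "0 < t" "t < 1"
        have "u (max ((1 - t) *\<^sub>R x + t *\<^sub>R y) m) \<le> u ((1 - t) *\<^sub>R max x m + t *\<^sub>R max y m)"
        proof (rule up)
          show "m \<le> max ((1 - t) *\<^sub>R x + t *\<^sub>R y) m" by simp
          have "(1 - t) * x \<le> (1 - t) * max x m" "t * y \<le> t * max y m"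
            "(1 - t) * m \<le> (1 - t) * max x m" "t * m \<le> t * max y m"
            using t by (auto intro!: mult_left_mono)
          moreover have "(1 - t) * m + t * m = m" by (simp add: algebra_simps)
          ultimately show "max ((1 - t) *\<^sub>R x + t *\<^sub>R y) m \<le> (1 - t) *\<^sub>R max x m + t *\<^sub>R max y m"
            unfolding real_scaleR_def by (intro max.boundedI) linarith+
        qed
        also have "\<dots> \<le> (1 - t) * u (max x m) + t * u (max y m)"
          using convex_onD[OF cvx, of t "max x m" "max y m"] t by simp
        finally show "u (max ((1 - t) *\<^sub>R x + t *\<^sub>R y) m) \<le> (1 - t) * u (max x m) + t * u (max y m)" .
      qed simp
      have c2: "convex_on UNIV u2" unfolding u2_def
      proof (rule convex_onI)
        fix t x y :: real assume t: "0 < t" "t < 1"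
        have "u (min ((1 - t) *\<^sub>R x + t *\<^sub>R y) m) \<le> u ((1 - t) *\<^sub>R min x m + t *\<^sub>R min y m)"
        proof (rule down)
          show "min ((1 - t) *\<^sub>R x + t *\<^sub>R y) m \<le> m" by simp
          have "(1 - t) * min x m \<le> (1 - t) * x" "t * min y m \<le> t * y"
            "(1 - t) * min x m \<le> (1 - t) * m" "t * min y m \<le> t * m"
            using t by (auto intro!: mult_left_mono)
          moreover have "(1 - t) * m + t * m = m" by (simp add: algebra_simps)
          ultimately show "(1 - t) *\<^sub>R min x m + t *\<^sub>R min y m \<le> min ((1 - t) *\<^sub>R x + t *\<^sub>R y) m"
            unfolding real_scaleR_def by (intro min.boundedI) linarith+
        qed
        also have "\<dots> \<le> (1 - t) * u (min x m) + t * u (min y m)"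
          using convex_onD[OF cvx, of t "min x m" "min y m"] t by simp
        finally show "u (min ((1 - t) *\<^sub>R x + t *\<^sub>R y) m) \<le> (1 - t) * u (min x m) + t * u (min y m)" .
      qed simp
      have mono1: "mono u1" unfolding u1_def by (rule monoI) (auto intro!: up)
      have anti2: "u2 y \<le> u2 x" if "x \<le> y" for x y unfolding u2_def using that by (auto intro!: down)
      have iZ: "integrable M (\<lambda>\<omega>. u1 (Z \<omega>))" "integrable M (\<lambda>\<omega>. u2 (Z \<omega>))"
        if [measurable]: "Z \<in> borel_measurable M" and uZ: "integrable M (\<lambda>\<omega>. u (Z \<omega>))" for Z
      proof -
        show "integrable M (\<lambda>\<omega>. u1 (Z \<omega>))"
        proof (rule Bochner_Integration.integrable_bound[OF _ _ AE_I2])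
          show "integrable M (\<lambda>\<omega>. \<bar>u (Z \<omega>)\<bar> + \<bar>u m\<bar>)" using uZ by auto
          show "(\<lambda>\<omega>. u1 (Z \<omega>)) \<in> borel_measurable M" by measurable
          show "norm (u1 (Z \<omega>)) \<le> norm (\<bar>u (Z \<omega>)\<bar> + \<bar>u m\<bar>)" for \<omega>
            unfolding u1_def by (cases "Z \<omega> \<le> m") (auto simp: max_def)
        qed
        show "integrable M (\<lambda>\<omega>. u2 (Z \<omega>))"
        proof (rule Bochner_Integration.integrable_bound[OF _ _ AE_I2])
          show "integrable M (\<lambda>\<omega>. \<bar>u (Z \<omega>)\<bar> + \<bar>u m\<bar>)" using uZ by auto
          show "(\<lambda>\<omega>. u2 (Z \<omega>)) \<in> borel_measurable M" by measurable
          show "norm (u2 (Z \<omega>)) \<le> norm (\<bar>u (Z \<omega>)\<bar> + \<bar>u m\<bar>)" for \<omega>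
            unfolding u2_def by (cases "Z \<omega> \<le> m") (auto simp: min_def)
        qed
      qed
      have eqZ: "(\<integral>\<omega>. u (Z \<omega>) \<partial>M) = (\<integral>\<omega>. u1 (Z \<omega>) \<partial>M) + (\<integral>\<omega>. u2 (Z \<omega>) \<partial>M) - u m"
        if [measurable]: "Z \<in> borel_measurable M" and uZ: "integrable M (\<lambda>\<omega>. u (Z \<omega>))" for Z
      proof -
        have "(\<integral>\<omega>. u (Z \<omega>) \<partial>M) = (\<integral>\<omega>. u1 (Z \<omega>) + u2 (Z \<omega>) - u m \<partial>M)"
          by (simp add: split[symmetric])
        also have "\<dots> = (\<integral>\<omega>. u1 (Z \<omega>) + u2 (Z \<omega>) \<partial>M) - (\<integral>\<omega>. u m \<partial>M)"
          using iZ[OF that] by (intro Bochner_Integration.integral_diff) auto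
        also have "\<dots> = (\<integral>\<omega>. u1 (Z \<omega>) \<partial>M) + (\<integral>\<omega>. u2 (Z \<omega>) \<partial>M) - u m"
          using iZ[OF that] by (simp add: Bochner_Integration.integral_add prob_space)
        finally show ?thesis .
      qed
      have "(\<integral>\<omega>. u1 (X \<omega>) \<partial>M) \<le> (\<integral>\<omega>. u1 (Y \<omega>) \<partial>M)"
        using cx_mono[OF P mX mY c1 mono1 iZ(1)[OF mX uX] iZ(1)[OF mY uY] Hp] by blast
      moreover have "(\<integral>\<omega>. u2 (X \<omega>) \<partial>M) \<le> (\<integral>\<omega>. u2 (Y \<omega>) \<partial>M)"
        using cx_antimono[OF P mX mY c2 anti2 iZ(2)[OF mX uX] iZ(2)[OF mY uY] Hm] by blast
      ultimately show ?thesis using eqZ[OF mX uX] eqZ[OF mY uY] by simp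
    qed
  qed
qed


definition Phi :: "(real \<Rightarrow> real) \<Rightarrow> real \<Rightarrow> ennreal" where
  "Phi q w = (\<integral>\<^sup>+t. ennreal (q t - w) * indicator {0<..<1} t \<partial>lborel)"

definition Bq :: "(real \<Rightarrow> real) \<Rightarrow> real \<Rightarrow> ereal" where
  "Bq q p = ext_integral lborel (\<lambda>t. indicator {p<..<1} t * q t)"

lemma pred_Ioo_real[measurable]: "Measurable.pred borel (\<lambda>x::real. x \<in> {a<..<b})"
  by (simp add: pred_def)

lemma mono_on_meas:
  fixes q :: "real \<Rightarrow> real"
  assumes "mono_on {0<..<1} q"
  shows "(\<lambda>t. indicator {0<..<1} t * q t) \<in> borel_measurable borel"
proof -
  have "q \<in> borel_measurable (restrict_space borel {0<..<1})"
    using borel_measurable_mono_on_fnc[OF assms] .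
  then have "(\<lambda>t. indicator {0<..<1} t *\<^sub>R q t) \<in> borel_measurable borel"
    by (subst (asm) borel_measurable_restrict_space_iff) auto
  then show ?thesis by simp
qed

lemma mono_on_meas_sub:
  fixes q :: "real \<Rightarrow> real"
  assumes "mono_on {0<..<1} q" "A \<subseteq> {0<..<1}" "A \<in> sets borel"
  shows "(\<lambda>t. indicator A t * q t) \<in> borel_measurable borel"
proof -
  have "(\<lambda>t. indicator A t * q t) = (\<lambda>t. indicator A t * (indicator {0<..<1} t * q t))"
    using assms(2) by (auto simp: indicator_def fun_eq_iff)
  also have "\<dots> \<in> borel_measurable borel"
    using mono_on_meas[OF assms(1)] assms(3) by measurable
  finally show ?thesis .
qed

lemma Phi_meas:
  fixes q :: "real \<Rightarrow> real"
  assumes "mono_on {0<..<1} q"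
  shows "(\<lambda>t. ennreal (q t - w) * indicator {0<..<1} t) \<in> borel_measurable borel"
proof -
  have "(\<lambda>t. ennreal (q t - w) * indicator {0<..<1} t) =
        (\<lambda>t. ennreal (indicator {0<..<1} t * q t - w) * indicator {0<..<1} t)"
    by (auto simp: indicator_def fun_eq_iff)
  also have "\<dots> \<in> borel_measurable borel"
    using mono_on_meas[OF assms] by measurable
  finally show ?thesis .
qed

lemma neg_part_finite:
  fixes q :: "real \<Rightarrow> real"
  assumes "mono_on {0<..<1} q" "0 < p" "p < 1"
  shows "(\<integral>\<^sup>+t. ennreal (- (indicator {p<..<1} t * q t)) \<partial>lborel) < \<infinity>"
proof -
  have "(\<integral>\<^sup>+t. ennreal (- (indicator {p<..<1} t * q t)) \<partial>lborel)
        \<le> (\<integral>\<^sup>+t. ennreal \<bar>q p\<bar> * indicator {p<..<1} t \<partial>lborel)"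
  proof (rule nn_integral_mono)
    fix t
    show "ennreal (- (indicator {p<..<1} t * q t)) \<le> ennreal \<bar>q p\<bar> * indicator {p<..<1} t"
    proof (cases "t \<in> {p<..<1}")
      case True
      then have "q p \<le> q t" using assms by (intro mono_onD[OF assms(1)]) auto
      then show ?thesis using True by (auto intro!: ennreal_leI)
    qed simp
  qed
  also have "\<dots> = ennreal \<bar>q p\<bar> * ennreal (1 - p)"
    using assms by (simp add: nn_integral_cmult_indicator)
  also have "\<dots> < \<infinity>" by (simp add: ennreal_mult_less_top)
  finally show ?thesis .
qed

lemma Bq_eq:
  fixes q :: "real \<Rightarrow> real"
  assumes "mono_on {0<..<1} q" "0 < p" "p < 1"
  shows "Bq q p = (if integrable lborel (\<lambda>t. indicator {p<..<1} t * q t)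
                   then ereal (\<integral>t. indicator {p<..<1} t * q t \<partial>lborel) else \<infinity>)"
proof -
  let ?f = "\<lambda>t. indicator {p<..<1} t * q t"
  have meas: "?f \<in> borel_measurable borel"
    using assms by (intro mono_on_meas_sub) auto
  have N: "(\<integral>\<^sup>+t. ennreal (- ?f t) \<partial>lborel) < \<infinity>"
    using neg_part_finite[OF assms] .
  show ?thesis
  proof (cases "integrable lborel ?f")
    case True
    then obtain r s where rs: "0 \<le> r" "0 \<le> s" "(\<integral>\<^sup>+x. ennreal (?f x) \<partial>lborel) = ennreal r"
      "(\<integral>\<^sup>+x. ennreal (- ?f x) \<partial>lborel) = ennreal s" "integral\<^sup>L lborel ?f = r - s"
      by (rule integrableE) blast
    then show ?thesis using True
      unfolding Bq_def ext_integral_def by (simp add: enn2ereal_ennreal)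
  next
    case False
    then have "(\<integral>\<^sup>+x. ennreal (?f x) \<partial>lborel) = \<infinity>"
      using meas N unfolding real_integrable_def by (auto simp: top_unique)
    then show ?thesis using False N
      unfolding Bq_def ext_integral_def 
      by (cases "(\<integral>\<^sup>+x. ennreal (- ?f x) \<partial>lborel)") (auto simp: enn2ereal_ennreal)
  qed
qed

lemma Phi_fin_imp_int:
  fixes q :: "real \<Rightarrow> real"
  assumes "mono_on {0<..<1} q" "0 < p" "p < 1" "Phi q w < \<top>"
  shows "integrable lborel (\<lambda>t. indicator {p<..<1} t * q t)"
proof -
  let ?f = "\<lambda>t. indicator {p<..<1} t * q t"
  have meas: "?f \<in> borel_measurable borel"
    using assms by (intro mono_on_meas_sub) auto
  have "(\<integral>\<^sup>+t. ennreal (?f t) \<partial>lborel) \<le>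
        (\<integral>\<^sup>+t. ennreal (q t - w) * indicator {0<..<1} t + ennreal \<bar>w\<bar> * indicator {p<..<1} t \<partial>lborel)"
  proof (rule nn_integral_mono)
    fix t
    show "ennreal (?f t) \<le> ennreal (q t - w) * indicator {0<..<1} t + ennreal \<bar>w\<bar> * indicator {p<..<1} t"
    proof (cases "t \<in> {p<..<1}")
      case True
      then have t: "t \<in> {0<..<1}" using assms by auto
      have "ennreal (q t) \<le> ennreal (max (q t - w) 0 + \<bar>w\<bar>)" by (intro ennreal_leI) auto
      also have "\<dots> = ennreal (max (q t - w) 0) + ennreal \<bar>w\<bar>" by (intro ennreal_plus) auto
      also have "\<dots> = ennreal (q t - w) + ennreal \<bar>w\<bar>"
        by (metis ennreal_max_0 max.commute)
      finally show ?thesis using True t by simp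
    qed simp
  qed
  also have "\<dots> = Phi q w + ennreal \<bar>w\<bar> * ennreal (1 - p)"
    unfolding Phi_def using assms Phi_meas[OF assms(1)]
    by (subst nn_integral_add) (auto simp: nn_integral_cmult_indicator)
  also have "\<dots> < \<infinity>" using assms(4) by (simp add: ennreal_mult_less_top)
  finally have P: "(\<integral>\<^sup>+t. ennreal (?f t) \<partial>lborel) < \<infinity>" .
  show ?thesis
    unfolding real_integrable_def using meas P neg_part_finite[OF assms(1-3)] by auto
qed

lemma int_imp_Phi_fin:
  fixes q :: "real \<Rightarrow> real"
  assumes "mono_on {0<..<1} q" "0 < p" "p < 1"
    and "integrable lborel (\<lambda>t. indicator {p<..<1} t * q t)"
  shows "Phi q w < \<top>"
proof -
  let ?f = "\<lambda>t. indicator {p<..<1} t * q t"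
  have meas: "?f \<in> borel_measurable borel"
    using assms by (intro mono_on_meas_sub) auto
  have P: "(\<integral>\<^sup>+t. ennreal (?f t) \<partial>lborel) < \<infinity>"
    using assms(4) unfolding real_integrable_def by (auto simp: less_top)
  have "Phi q w \<le> (\<integral>\<^sup>+t. ennreal (q p - w) * indicator {0<..p} t + (ennreal (?f t)
          + ennreal \<bar>w\<bar> * indicator {p<..<1} t) \<partial>lborel)"
    unfolding Phi_def
  proof (rule nn_integral_mono)
    fix t
    show "ennreal (q t - w) * indicator {0<..<1} t \<le> ennreal (q p - w) * indicator {0<..p} t + (ennreal (?f t)
          + ennreal \<bar>w\<bar> * indicator {p<..<1} t)"
    proof (cases "t \<in> {0<..<1}")
      case True
      show ?thesis
      proof (cases "t \<le> p")
        case True2: True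
        then have "q t \<le> q p" using True assms by (intro mono_onD[OF assms(1)]) auto
        then have "ennreal (q t - w) \<le> ennreal (q p - w)" by (intro ennreal_leI) auto
        then show ?thesis using True True2 by (simp add: indicator_def)
      next
        case False
        have "ennreal (q t - w) \<le> ennreal (q t + \<bar>w\<bar>)" by (intro ennreal_leI) auto
        also have "\<dots> \<le> ennreal (max (q t) 0 + \<bar>w\<bar>)" by (intro ennreal_leI) auto
        also have "\<dots> = ennreal (max (q t) 0) + ennreal \<bar>w\<bar>" by (intro ennreal_plus) auto
        also have "\<dots> = ennreal (q t) + ennreal \<bar>w\<bar>"
          by (metis ennreal_max_0 max.commute)
        finally show ?thesis using True False by (simp add: indicator_def)
      qed
    qed simp
  qed
  also have "\<dots> = ennreal (q p - w) * ennreal p + ((\<integral>\<^sup>+t. ennreal (?f t) \<partial>lborel) + ennreal \<bar>w\<bar> * ennreal (1 - p))"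
    using assms meas
    by (subst nn_integral_add, simp, measurable, subst nn_integral_add) (auto simp: nn_integral_cmult_indicator)
  also have "\<dots> < \<infinity>" using P by (simp add: ennreal_mult_less_top)
  finally show ?thesis by simp
qed

lemma Phi_int:
  fixes q :: "real \<Rightarrow> real"
  assumes "mono_on {0<..<1} q" "Phi q v < \<top>"
  shows "integrable lborel (\<lambda>t. indicator {0<..<1} t * max (q t - v) 0)"
    and "(\<integral>t. indicator {0<..<1} t * max (q t - v) 0 \<partial>lborel) = enn2real (Phi q v)"
proof -
  let ?g = "\<lambda>t. indicator {0<..<1} t * max (q t - v) 0"
  have eq: "(\<lambda>t. ennreal (?g t)) = (\<lambda>t. ennreal (q t - v) * indicator {0<..<1} t)"
    by (auto simp: fun_eq_iff indicator_def ennreal_max_0 max.commute)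
  have meas: "?g \<in> borel_measurable borel"
  proof -
    have "?g = (\<lambda>t. indicator {0<..<1} t * max (indicator {0<..<1} t * q t - v) 0)"
      by (auto simp: fun_eq_iff indicator_def)
    also have "\<dots> \<in> borel_measurable borel" using mono_on_meas[OF assms(1)] by measurable
    finally show ?thesis .
  qed
  show "integrable lborel ?g"
    using assms(2) meas by (intro integrableI_nonneg) (auto simp: eq Phi_def)
  show "(\<integral>t. ?g t \<partial>lborel) = enn2real (Phi q v)"
    using meas by (subst integral_eq_nn_integral) (auto simp: eq Phi_def)
qed

lemma Bq_upper:
  fixes q :: "real \<Rightarrow> real"
  assumes "mono_on {0<..<1} q" "0 < p" "p < 1" "Phi q v < \<top>"
  shows "(\<integral>t. indicator {p<..<1} t * q t \<partial>lborel) \<le> (1 - p) * v + enn2real (Phi q v)"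
proof -
  have I1: "integrable lborel (\<lambda>t. indicator {p<..<1} t * q t)"
    using Phi_fin_imp_int[OF assms] .
  have I2: "integrable lborel (\<lambda>t. indicator {p<..<1} t * v)"
    using assms(2,3) by (intro integrable_mult_left) (simp add: integrable_indicator_iff emeasure_lborel_Ioo)
  have "(\<integral>t. indicator {p<..<1} t * q t \<partial>lborel) =
        (\<integral>t. indicator {p<..<1} t * q t - indicator {p<..<1} t * v \<partial>lborel) + (\<integral>t. indicator {p<..<1} t * v \<partial>lborel)"
    using Bochner_Integration.integral_diff[OF I1 I2] by simp
  also have "(\<integral>t. indicator {p<..<1} t * v \<partial>lborel) = (1 - p) * v"
    using assms by simp
  also have "(\<integral>t. indicator {p<..<1} t * q t - indicator {p<..<1} t * v \<partial>lborel)
             \<le> (\<integral>t. indicator {0<..<1} t * max (q t - v) 0 \<partial>lborel)"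
    using I1 I2 Phi_int[OF assms(1,4)] assms(2)
    by (intro integral_mono) (auto simp: indicator_def)
  also have "\<dots> = enn2real (Phi q v)" using Phi_int[OF assms(1,4)] by simp
  finally show ?thesis by simp
qed

lemma Bq_exact:
  fixes q :: "real \<Rightarrow> real"
  assumes "mono_on {0<..<1} q" "0 < p" "p < 1" "Phi q (q p) < \<top>"
  shows "(\<integral>t. indicator {p<..<1} t * q t \<partial>lborel) = (1 - p) * q p + enn2real (Phi q (q p))"
proof -
  let ?v = "q p"
  have I1: "integrable lborel (\<lambda>t. indicator {p<..<1} t * q t)"
    using Phi_fin_imp_int[OF assms] .
  have I2: "integrable lborel (\<lambda>t. indicator {p<..<1} t * ?v)"
    using assms(2,3) by (intro integrable_mult_left) (simp add: integrable_indicator_iff emeasure_lborel_Ioo)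
  have "(\<integral>t. indicator {p<..<1} t * q t \<partial>lborel) =
        (\<integral>t. indicator {p<..<1} t * q t - indicator {p<..<1} t * ?v \<partial>lborel) + (\<integral>t. indicator {p<..<1} t * ?v \<partial>lborel)"
    using Bochner_Integration.integral_diff[OF I1 I2] by simp
  also have "(\<integral>t. indicator {p<..<1} t * ?v \<partial>lborel) = (1 - p) * ?v"
    using assms by simp
  also have "(\<lambda>t. indicator {p<..<1} t * q t - indicator {p<..<1} t * ?v)
             = (\<lambda>t. indicator {0<..<1} t * max (q t - ?v) 0)"
  proof
    fix t
    show "indicator {p<..<1} t * q t - indicator {p<..<1} t * ?v = indicator {0<..<1} t * max (q t - ?v) 0"
    proof (cases "t \<in> {0<..<1}")
      case True
      show ?thesis
      proof (cases "t \<le> p")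
        case True2: True
        then have "q t \<le> q p" using True assms by (intro mono_onD[OF assms(1)]) auto
        then show ?thesis using True True2 by (simp add: indicator_def)
      next
        case False
        then have "q p \<le> q t" using True assms by (intro mono_onD[OF assms(1)]) auto
        then show ?thesis using True False by (simp add: indicator_def)
      qed
    qed (use assms(2) in \<open>auto simp: indicator_def\<close>)
  qed
  also have "(\<integral>t. indicator {0<..<1} t * max (q t - ?v) 0 \<partial>lborel) = enn2real (Phi q ?v)"
    using Phi_int[OF assms(1,4)] by simp
  finally show ?thesis by simp
qed

lemma Phi_meas_sub:
  fixes q :: "real \<Rightarrow> real"
  assumes "mono_on {0<..<1} q" "A \<subseteq> {0<..<1}" "A \<in> sets borel"
  shows "(\<lambda>t. ennreal (q t - w) * indicator A t) \<in> borel_measurable borel"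
proof -
  have "(\<lambda>t. ennreal (q t - w) * indicator A t) =
        (\<lambda>t. ennreal (indicator {0<..<1} t * q t - w) * indicator A t)"
    using assms(2) by (auto simp: indicator_def fun_eq_iff)
  also have "\<dots> \<in> borel_measurable borel"
    using mono_on_meas[OF assms(1)] assms(3) by measurable
  finally show ?thesis .
qed

lemma Phi_le_from_B:
  fixes q :: "real \<Rightarrow> real"
  assumes mono: "mono_on {0<..<1} q" and c: "0 \<le> c"
    and H: "\<And>p. 0 < p \<Longrightarrow> p < 1 \<Longrightarrow> integrable lborel (\<lambda>t. indicator {p<..<1} t * q t) \<and>
             (\<integral>t. indicator {p<..<1} t * q t \<partial>lborel) \<le> (1 - p) * w + c"
  shows "Phi q w \<le> ennreal c"
proof -
  define S where "S = {t\<in>{0<..<1}. w < q t}"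
  show ?thesis
  proof (cases "S = {}")
    case True
    have z: "ennreal (q t - w) * indicator {0<..<1} t = 0" for t
      using True unfolding S_def by (cases "t \<in> {0<..<1}") (auto simp: ennreal_neg)
    have "Phi q w = 0" unfolding Phi_def by (simp add: z)
    then show ?thesis by simp
  next
    case False
    define r where "r = Inf S"
    have bdd: "bdd_below S" unfolding S_def by (rule bdd_belowI[of _ 0]) auto
    have r0: "0 \<le> r" unfolding r_def using False by (intro cInf_greatest) (auto simp: S_def)
    obtain s where s: "s \<in> S" using False by auto
    have r1: "r < 1" using cInf_lower[OF s bdd] s unfolding r_def S_def by auto
    have above: "w < q t" if t: "r < t" "t < 1" for t
    proof -
      obtain s' where s': "s' \<in> S" "s' < t" using t(1) False bdd unfolding r_def
        by (meson cInf_lessD)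
      then have "q s' \<le> q t" using t r0 unfolding S_def by (intro mono_onD[OF mono]) auto
      then show ?thesis using s' unfolding S_def by auto
    qed
    have below: "q t \<le> w" if t: "0 < t" "t < r" for t
    proof (rule ccontr)
      assume "\<not> q t \<le> w"
      then have "t \<in> S" using t r1 unfolding S_def by auto
      then have "r \<le> t" unfolding r_def using bdd by (rule cInf_lower)
      then show False using t by simp
    qed
    have part: "(\<integral>\<^sup>+t. ennreal (q t - w) * indicator {p<..<1} t \<partial>lborel) \<le> ennreal c"
      if p: "r < p" "p < 1" for p
    proof -
      have p0: "0 < p" using p r0 by simp
      have I1: "integrable lborel (\<lambda>t. indicator {p<..<1} t * q t)"
        and le: "(\<integral>t. indicator {p<..<1} t * q t \<partial>lborel) \<le> (1 - p) * w + c"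
        using H[OF p0 p(2)] by auto
      have I2: "integrable lborel (\<lambda>t. indicator {p<..<1} t * w)"
        using p by (intro integrable_mult_left) (simp add: integrable_indicator_iff emeasure_lborel_Ioo)
      let ?f = "\<lambda>t. indicator {p<..<1} t * q t - indicator {p<..<1} t * w"
      have eq: "ennreal (q t - w) * indicator {p<..<1} t = ennreal (?f t)" for t
        by (cases "t \<in> {p<..<1}") auto
      have "(\<integral>\<^sup>+t. ennreal (q t - w) * indicator {p<..<1} t \<partial>lborel) = (\<integral>\<^sup>+t. ennreal (?f t) \<partial>lborel)"
        by (simp add: eq)
      also have "\<dots> = ennreal (\<integral>t. ?f t \<partial>lborel)"
      proof (rule nn_integral_eq_integral)
        show "integrable lborel ?f" using I1 I2 by auto
        show "AE t in lborel. 0 \<le> ?f t"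
        proof (intro AE_I2)
          fix t show "0 \<le> ?f t"
            using above[of t] p by (cases "t \<in> {p<..<1}") auto
        qed
      qed
      also have "(\<integral>t. ?f t \<partial>lborel) = (\<integral>t. indicator {p<..<1} t * q t \<partial>lborel) - (1 - p) * w"
        using Bochner_Integration.integral_diff[OF I1 I2] p by simp
      also have "\<dots> \<le> c" using le by simp
      finally show ?thesis by (simp add: ennreal_leI)
    qed
    define pn where "pn n = r + (1 - r) / real (Suc (Suc n))" for n
    have pn: "r < pn n" "pn n < 1" for n
    proof -
      have "(1 - r) / real (Suc (Suc n)) < (1 - r) / 1"
        using r1 by (intro divide_strict_left_mono) auto
      moreover have "0 < (1 - r) / real (Suc (Suc n))" using r1 by auto
      ultimately show "r < pn n" "pn n < 1" unfolding pn_def by auto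
    qed
    have pn_mono: "pn (Suc n) \<le> pn n" for n
      unfolding pn_def using r1 by (intro add_left_mono divide_left_mono) auto
    have "Phi q w = (\<integral>\<^sup>+t. ennreal (q t - w) * indicator {r<..<1} t \<partial>lborel)"
      unfolding Phi_def
    proof (rule nn_integral_cong_AE)
      show "AE t in lborel. ennreal (q t - w) * indicator {0<..<1} t = ennreal (q t - w) * indicator {r<..<1} t"
        using AE_lborel_singleton[of r]
      proof eventually_elim
        case (elim t)
        show ?case
        proof (cases "0 < t \<and> t < r")
          case True
          then show ?thesis using below[of t] r1 by (auto simp: ennreal_neg indicator_def)
        next
          case False
          then show ?thesis using elim r0 by (auto simp: indicator_def)
        qed
      qed
    qed
    also have "\<dots> = (\<integral>\<^sup>+t. (SUP n. ennreal (q t - w) * indicator {pn n<..<1} t) \<partial>lborel)"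
    proof (intro nn_integral_cong)
      fix t
      show "ennreal (q t - w) * indicator {r<..<1} t = (SUP n. ennreal (q t - w) * indicator {pn n<..<1} t)"
      proof (rule antisym)
        show "(SUP n. ennreal (q t - w) * indicator {pn n<..<1} t) \<le> ennreal (q t - w) * indicator {r<..<1} t"
          using pn by (intro SUP_least mult_left_mono) (auto simp: indicator_def intro: less_trans)
        show "ennreal (q t - w) * indicator {r<..<1} t \<le> (SUP n. ennreal (q t - w) * indicator {pn n<..<1} t)"
        proof (cases "t \<in> {r<..<1}")
          case True
          obtain n where n: "(1 - r) / (t - r) < real n" using reals_Archimedean2 by blast
          have "(1 - r) / real (Suc (Suc n)) < t - r"
            using True n r1 by (auto simp: field_simps)
          then have "pn n < t" unfolding pn_def by simp
          then show ?thesis using True by (intro SUP_upper2[of n]) auto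
        qed simp
      qed
    qed
    also have "\<dots> = (SUP n. (\<integral>\<^sup>+t. ennreal (q t - w) * indicator {pn n<..<1} t \<partial>lborel))"
    proof (rule nn_integral_monotone_convergence_SUP)
      show "incseq (\<lambda>n t. ennreal (q t - w) * indicator {pn n<..<1} t)"
        by (intro incseq_SucI le_funI mult_left_mono) (use pn_mono in \<open>auto simp: indicator_def intro: le_less_trans\<close>)
      show "\<And>n. (\<lambda>t. ennreal (q t - w) * indicator {pn n<..<1} t) \<in> borel_measurable lborel"
      proof -
        fix n
        have "{pn n<..<1} \<subseteq> {0<..<1}" using pn[of n] r0 by auto
        then show "(\<lambda>t. ennreal (q t - w) * indicator {pn n<..<1} t) \<in> borel_measurable lborel"
          using Phi_meas_sub[OF mono] by simp
      qed
    qed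
    also have "\<dots> \<le> ennreal c"
      using pn by (intro SUP_least part)
    finally show ?thesis .
  qed
qed

lemma conv_le_enn: "conv_le (enn2ereal a) (enn2ereal b) \<longleftrightarrow> a = \<top> \<or> a \<le> b"
proof -
  have "enn2ereal b \<noteq> -\<infinity>" using enn2ereal_nonneg[of b] by auto
  then show ?thesis unfolding conv_le_def by (simp add: less_eq_ennreal.rep_eq)
qed

lemma core_B:
  fixes q1 q2 :: "real \<Rightarrow> real"
  assumes m1: "mono_on {0<..<1} q1" and m2: "mono_on {0<..<1} q2"
  shows "(\<forall>p. 0 < p \<and> p < 1 \<longrightarrow> conv_le (Bq q1 p) (Bq q2 p)) \<longleftrightarrow>
         (\<forall>w. conv_le (enn2ereal (Phi q1 w)) (enn2ereal (Phi q2 w)))"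
proof
  assume H: "\<forall>p. 0 < p \<and> p < 1 \<longrightarrow> conv_le (Bq q1 p) (Bq q2 p)"
  show "\<forall>w. conv_le (enn2ereal (Phi q1 w)) (enn2ereal (Phi q2 w))"
  proof
    fix w
    show "conv_le (enn2ereal (Phi q1 w)) (enn2ereal (Phi q2 w))"
      unfolding conv_le_enn
    proof (cases "Phi q1 w < \<top> \<and> Phi q2 w < \<top>")
      case True
      have "Phi q1 w \<le> ennreal (enn2real (Phi q2 w))"
      proof (rule Phi_le_from_B[OF m1])
        fix p :: real assume p: "0 < p" "p < 1"
        have I1: "integrable lborel (\<lambda>t. indicator {p<..<1} t * q1 t)"
          using Phi_fin_imp_int[OF m1 p] True by auto
        have I2: "integrable lborel (\<lambda>t. indicator {p<..<1} t * q2 t)"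
          using Phi_fin_imp_int[OF m2 p] True by auto
        have "conv_le (Bq q1 p) (Bq q2 p)" using H p by auto
        then have "(\<integral>t. indicator {p<..<1} t * q1 t \<partial>lborel) \<le> (\<integral>t. indicator {p<..<1} t * q2 t \<partial>lborel)"
          using I1 I2 unfolding Bq_eq[OF m1 p] Bq_eq[OF m2 p] conv_le_def by simp
        also have "\<dots> \<le> (1 - p) * w + enn2real (Phi q2 w)"
          using Bq_upper[OF m2 p] True by auto
        finally show "integrable lborel (\<lambda>t. indicator {p<..<1} t * q1 t) \<and>
          (\<integral>t. indicator {p<..<1} t * q1 t \<partial>lborel) \<le> (1 - p) * w + enn2real (Phi q2 w)"
          using I1 by simp
      qed simp
      then show "Phi q1 w = \<top> \<or> Phi q1 w \<le> Phi q2 w"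
        using True by (auto simp: ennreal_enn2real_if split: if_splits)
    next
      case False
      then have "Phi q1 w = \<top> \<or> Phi q2 w = \<top>" using top.not_eq_extremum by blast
      then show "Phi q1 w = \<top> \<or> Phi q1 w \<le> Phi q2 w" by auto
    qed
  qed
next
  assume H: "\<forall>w. conv_le (enn2ereal (Phi q1 w)) (enn2ereal (Phi q2 w))"
  show "\<forall>p. 0 < p \<and> p < 1 \<longrightarrow> conv_le (Bq q1 p) (Bq q2 p)"
  proof (intro allI impI)
    fix p :: real assume "0 < p \<and> p < 1"
    then have p: "0 < p" "p < 1" by auto
    let ?v = "q2 p"
    show "conv_le (Bq q1 p) (Bq q2 p)"
    proof (cases "Phi q2 ?v < \<top>")
      case False
      then have "\<not> integrable lborel (\<lambda>t. indicator {p<..<1} t * q2 t)"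
        using int_imp_Phi_fin[OF m2 p] by auto
      then show ?thesis unfolding Bq_eq[OF m2 p] conv_le_def by simp
    next
      case True2: True
      have "Phi q1 ?v = \<top> \<or> Phi q1 ?v \<le> Phi q2 ?v" using H conv_le_enn by blast
      then show ?thesis
      proof
        assume "Phi q1 ?v = \<top>"
        then have "\<not> integrable lborel (\<lambda>t. indicator {p<..<1} t * q1 t)"
          using int_imp_Phi_fin[OF m1 p, of ?v] by auto
        then show ?thesis unfolding Bq_eq[OF m1 p] conv_le_def by simp
      next
        assume le: "Phi q1 ?v \<le> Phi q2 ?v"
        then have T1: "Phi q1 ?v < \<top>" using True2 by auto
        have I1: "integrable lborel (\<lambda>t. indicator {p<..<1} t * q1 t)"
          using Phi_fin_imp_int[OF m1 p T1] .
        have I2: "integrable lborel (\<lambda>t. indicator {p<..<1} t * q2 t)"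
          using Phi_fin_imp_int[OF m2 p True2] .
        have "(\<integral>t. indicator {p<..<1} t * q1 t \<partial>lborel) \<le> (1 - p) * ?v + enn2real (Phi q1 ?v)"
          using Bq_upper[OF m1 p T1] .
        also have "\<dots> \<le> (1 - p) * ?v + enn2real (Phi q2 ?v)"
          using le True2 by (simp add: enn2real_mono)
        also have "\<dots> = (\<integral>t. indicator {p<..<1} t * q2 t \<partial>lborel)"
          using Bq_exact[OF m2 p True2] by simp
        finally show ?thesis using I1 I2 unfolding Bq_eq[OF m1 p] Bq_eq[OF m2 p] conv_le_def by simp
      qed
    qed
  qed
qed

definition Aq :: "(real \<Rightarrow> real) \<Rightarrow> real \<Rightarrow> ereal" where
  "Aq q p = ext_integral lborel (\<lambda>t. indicator {0<..<p} t * q t)"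

definition Psi :: "(real \<Rightarrow> real) \<Rightarrow> real \<Rightarrow> ennreal" where
  "Psi q w = (\<integral>\<^sup>+t. ennreal (w - q t) * indicator {0<..<1} t \<partial>lborel)"

definition reflq :: "(real \<Rightarrow> real) \<Rightarrow> real \<Rightarrow> real" where
  "reflq q t = - q (1 - t)"

lemma mono_reflq:
  fixes q :: "real \<Rightarrow> real"
  assumes "mono_on {0<..<1} q"
  shows "mono_on {0<..<1} (reflq q)"
  unfolding reflq_def
  by (rule mono_onI) (use assms in \<open>auto intro!: mono_onD[OF assms]\<close>)

lemma nn_refl:
  fixes f :: "real \<Rightarrow> ennreal"
  assumes "f \<in> borel_measurable borel"
  shows "(\<integral>\<^sup>+t. f (1 - t) \<partial>lborel) = (\<integral>\<^sup>+t. f t \<partial>lborel)"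
  using nn_integral_real_affine[OF assms, of "-1" 1] by simp

lemma Psi_refl:
  fixes q :: "real \<Rightarrow> real"
  assumes "mono_on {0<..<1} q"
  shows "Psi q w = Phi (reflq q) (-w)"
proof -
  let ?f = "\<lambda>t. ennreal (w - q t) * indicator {0<..<1} t"
  have "?f = (\<lambda>t. ennreal (w - indicator {0<..<1} t * q t) * indicator {0<..<1} t)"
    by (auto simp: fun_eq_iff indicator_def)
  also have "\<dots> \<in> borel_measurable borel" using mono_on_meas[OF assms] by measurable
  finally have meas: "?f \<in> borel_measurable borel" .
  have "Phi (reflq q) (-w) = (\<integral>\<^sup>+t. ?f (1 - t) \<partial>lborel)"
    unfolding Phi_def reflq_def by (intro nn_integral_cong) (auto simp: indicator_def)
  also have "\<dots> = Psi q w" unfolding Psi_def using nn_refl[OF meas] .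
  finally show ?thesis by simp
qed

lemma ereal_minus_swap: "a \<noteq> \<infinity> \<Longrightarrow> a \<noteq> -\<infinity> \<Longrightarrow> a - b = - (b - (a::ereal))"
  by (cases a; cases b) auto

lemma Aq_refl:
  fixes q :: "real \<Rightarrow> real"
  assumes m: "mono_on {0<..<1} q" and p: "0 < p" "p < 1"
  shows "Aq q p = - Bq (reflq q) (1 - p)"
proof -
  let ?g = "\<lambda>t. indicator {0<..<p} t * q t"
  have gm: "?g \<in> borel_measurable borel" using p by (intro mono_on_meas_sub[OF m]) auto
  have eq: "indicator {1-p<..<1} t * reflq q t = - ?g (1 - t)" for t
    unfolding reflq_def by (auto simp: indicator_def)
  have P: "(\<integral>\<^sup>+t. ennreal (- (indicator {1-p<..<1} t * reflq q t)) \<partial>lborel) = (\<integral>\<^sup>+t. ennreal (?g t) \<partial>lborel)"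
    unfolding eq using nn_refl[of "\<lambda>t. ennreal (?g t)"] gm by simp
  have N: "(\<integral>\<^sup>+t. ennreal (indicator {1-p<..<1} t * reflq q t) \<partial>lborel) = (\<integral>\<^sup>+t. ennreal (- ?g t) \<partial>lborel)"
    unfolding eq using nn_refl[of "\<lambda>t. ennreal (- ?g t)"] gm by simp
  have fin: "(\<integral>\<^sup>+t. ennreal (?g t) \<partial>lborel) < \<infinity>"
    using neg_part_finite[OF mono_reflq[OF m], of "1 - p"] p unfolding P by simp
  show ?thesis
    unfolding Aq_def Bq_def ext_integral_def P N
    using fin by (intro ereal_minus_swap) (auto simp: less_top[symmetric])
qed

lemma conv_le_neg: "conv_le (- a) (- b) \<longleftrightarrow> conv_le b a"
  unfolding conv_le_def by (cases a; cases b) auto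

lemma core_A:
  fixes q1 q2 :: "real \<Rightarrow> real"
  assumes m1: "mono_on {0<..<1} q1" and m2: "mono_on {0<..<1} q2"
  shows "(\<forall>p. 0 < p \<and> p < 1 \<longrightarrow> conv_le (Aq q2 p) (Aq q1 p)) \<longleftrightarrow>
         (\<forall>w. conv_le (enn2ereal (Psi q1 w)) (enn2ereal (Psi q2 w)))"
proof -
  have "(\<forall>p. 0 < p \<and> p < 1 \<longrightarrow> conv_le (Aq q2 p) (Aq q1 p)) \<longleftrightarrow>
        (\<forall>p. 0 < p \<and> p < 1 \<longrightarrow> conv_le (Bq (reflq q1) (1 - p)) (Bq (reflq q2) (1 - p)))"
    using Aq_refl[OF m1] Aq_refl[OF m2] conv_le_neg by auto
  also have "\<dots> \<longleftrightarrow> (\<forall>p. 0 < p \<and> p < 1 \<longrightarrow> conv_le (Bq (reflq q1) p) (Bq (reflq q2) p))"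
  proof safe
    fix p :: real assume H: "\<forall>p. 0 < p \<and> p < 1 \<longrightarrow> conv_le (Bq (reflq q1) (1 - p)) (Bq (reflq q2) (1 - p))"
      and p: "0 < p" "p < 1"
    then show "conv_le (Bq (reflq q1) p) (Bq (reflq q2) p)" using H[rule_format, of "1 - p"] by simp
  qed auto
  also have "\<dots> \<longleftrightarrow> (\<forall>w. conv_le (enn2ereal (Phi (reflq q1) w)) (enn2ereal (Phi (reflq q2) w)))"
    by (rule core_B[OF mono_reflq[OF m1] mono_reflq[OF m2]])
  also have "\<dots> \<longleftrightarrow> (\<forall>w. conv_le (enn2ereal (Psi q1 w)) (enn2ereal (Psi q2 w)))"
    unfolding Psi_refl[OF m1] Psi_refl[OF m2]
    by (metis minus_minus)
  finally show ?thesis .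
qed


lemma quantile_transfer:
  fixes M :: "'a measure" and X :: "'a \<Rightarrow> real" and g :: "real \<Rightarrow> ennreal"
  assumes "prob_space M" "X \<in> borel_measurable M" "g \<in> borel_measurable borel"
  shows "(\<integral>\<^sup>+\<omega>. g (X \<omega>) \<partial>M) = (\<integral>\<^sup>+t. g (quantile M X t) * indicator {0<..<1} t \<partial>lborel)"
proof -
  interpret P: prob_space M by fact
  interpret D: cdf_distribution "distr M borel X"
    unfolding cdf_distribution_def using assms by simp
  have q: "quantile M X t = D.I t" for t
  proof -
    have "cdf (distr M borel X) x = measure M {\<omega> \<in> space M. X \<omega> \<le> x}" for x
      unfolding cdf_def using assms
      by (subst measure_distr) (auto intro!: arg_cong[where f="measure M"])
    then show ?thesis unfolding quantile_def by simp
  qed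
  have mI: "D.I \<in> restrict_space lborel {0<..<1} \<rightarrow>\<^sub>M borel"
    using D.measurable_CI by (simp add: measurable_def space_restrict_space sets_restrict_space)
  have "(\<integral>\<^sup>+\<omega>. g (X \<omega>) \<partial>M) = (\<integral>\<^sup>+x. g x \<partial>distr M borel X)"
    using assms by (simp add: nn_integral_distr)
  also have "\<dots> = (\<integral>\<^sup>+x. g x \<partial>distr (restrict_space lborel {0<..<1}) borel D.I)"
    by (simp add: D.distr_I_eq_M)
  also have "\<dots> = (\<integral>\<^sup>+t. g (D.I t) \<partial>restrict_space lborel {0<..<1})"
    using assms mI by (simp add: nn_integral_distr)
  also have "\<dots> = (\<integral>\<^sup>+t. g (D.I t) * indicator {0<..<1} t \<partial>lborel)"
    by (simp add: nn_integral_restrict_space)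
  finally show ?thesis by (simp add: q)
qed


lemma quantile_mono:
  fixes M :: "'a measure" and X :: "'a \<Rightarrow> real"
  assumes "prob_space M" "X \<in> borel_measurable M"
  shows "mono_on {0<..<1} (quantile M X)"
proof -
  interpret P: prob_space M by fact
  interpret D: cdf_distribution "distr M borel X"
    unfolding cdf_distribution_def using assms by simp
  have q: "quantile M X = D.I"
  proof
    fix t
    have "cdf (distr M borel X) x = measure M {\<omega> \<in> space M. X \<omega> \<le> x}" for x
      unfolding cdf_def using assms
      by (subst measure_distr) (auto intro!: arg_cong[where f="measure M"])
    then show "quantile M X t = D.I t" unfolding quantile_def by simp
  qed
  show ?thesis unfolding q by (rule D.mono_I)
qed

lemma convex_hinge_pos: "convex_on UNIV (\<lambda>x::real. max (x - w) 0)"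
proof (rule convex_onI)
  fix t x y :: real assume t: "0 < t" "t < 1"
  have a: "(1 - t) * (x - w) \<le> (1 - t) * max (x - w) 0" "t * (y - w) \<le> t * max (y - w) 0"
    "0 \<le> (1 - t) * max (x - w) 0" "0 \<le> t * max (y - w) 0"
    using t by (auto intro!: mult_left_mono)
  have b: "(1 - t) * x + t * y - w = (1 - t) * (x - w) + t * (y - w)" by (simp add: algebra_simps)
  show "max ((1 - t) *\<^sub>R x + t *\<^sub>R y - w) 0 \<le> (1 - t) * max (x - w) 0 + t * max (y - w) 0"
    unfolding real_scaleR_def b using a by (intro max.boundedI) linarith+
qed simp

lemma convex_hinge_neg: "convex_on UNIV (\<lambda>x::real. max (- (x - w)) 0)"
proof (rule convex_onI)
  fix t x y :: real assume t: "0 < t" "t < 1"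
  have a: "(1 - t) * (w - x) \<le> (1 - t) * max (- (x - w)) 0" "t * (w - y) \<le> t * max (- (y - w)) 0"
    "0 \<le> (1 - t) * max (- (x - w)) 0" "0 \<le> t * max (- (y - w)) 0"
    using t by (auto intro!: mult_left_mono)
  have b: "- ((1 - t) * x + t * y - w) = (1 - t) * (w - x) + t * (w - y)" by (simp add: algebra_simps)
  show "max (- ((1 - t) *\<^sub>R x + t *\<^sub>R y - w)) 0 \<le> (1 - t) * max (- (x - w)) 0 + t * max (- (y - w)) 0"
    unfolding real_scaleR_def b using a by (intro max.boundedI) linarith+
qed simp

lemma dag_nonneg:
  fixes M :: "'a measure" and X Y :: "'a \<Rightarrow> real" and f :: "real \<Rightarrow> real"
  assumes P: "prob_space M" and mX[measurable]: "X \<in> borel_measurable M" and mY[measurable]: "Y \<in> borel_measurable M"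
    and D: "dagger_cx M X Y" and cvx: "convex_on UNIV f" and nn: "\<And>x. 0 \<le> f x"
  shows "(\<integral>\<^sup>+\<omega>. ennreal (f (X \<omega>)) \<partial>M) = \<top> \<or>
         (\<integral>\<^sup>+\<omega>. ennreal (f (X \<omega>)) \<partial>M) \<le> (\<integral>\<^sup>+\<omega>. ennreal (f (Y \<omega>)) \<partial>M)"
proof (cases "(\<integral>\<^sup>+\<omega>. ennreal (f (X \<omega>)) \<partial>M) < \<top> \<and> (\<integral>\<^sup>+\<omega>. ennreal (f (Y \<omega>)) \<partial>M) < \<top>")
  case True
  have fm[measurable]: "f \<in> borel_measurable borel" by (rule convex_meas[OF cvx])
  have iX: "integrable M (\<lambda>\<omega>. f (X \<omega>))" using True nn by (intro integrableI_nonneg) auto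
  have iY: "integrable M (\<lambda>\<omega>. f (Y \<omega>))" using True nn by (intro integrableI_nonneg) auto
  have le: "(\<integral>\<omega>. f (X \<omega>) \<partial>M) \<le> (\<integral>\<omega>. f (Y \<omega>) \<partial>M)"
    using D cvx iX iY unfolding dagger_cx_def by blast
  have "(\<integral>\<^sup>+\<omega>. ennreal (f (X \<omega>)) \<partial>M) = ennreal (\<integral>\<omega>. f (X \<omega>) \<partial>M)"
    using iX nn by (intro nn_integral_eq_integral) auto
  also have "\<dots> \<le> ennreal (\<integral>\<omega>. f (Y \<omega>) \<partial>M)" using le by (rule ennreal_leI)
  also have "\<dots> = (\<integral>\<^sup>+\<omega>. ennreal (f (Y \<omega>)) \<partial>M)"
    using iY nn by (intro nn_integral_eq_integral[symmetric]) auto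
  finally show ?thesis by simp
next
  case False
  then have "(\<integral>\<^sup>+\<omega>. ennreal (f (X \<omega>)) \<partial>M) = \<top> \<or> (\<integral>\<^sup>+\<omega>. ennreal (f (Y \<omega>)) \<partial>M) = \<top>"
    using top.not_eq_extremum by blast
  then show ?thesis by auto
qed

theorem theorem2:
  fixes M :: "'a measure" and X Y :: "'a \<Rightarrow> real"
  assumes "prob_space M" and "atomless M"
    and "X \<in> borel_measurable M" and "Y \<in> borel_measurable M"
  shows "(dagger_cx M X Y \<longleftrightarrow>
          (\<forall>p::real. 0 < p \<and> p < 1 \<longrightarrow>
             conv_le (ext_integral lborel (\<lambda>t. indicator {0<..<p} t * quantile M Y t))
                     (ext_integral lborel (\<lambda>t. indicator {0<..<p} t * quantile M X t)) \<and>
             conv_le (ext_integral lborel (\<lambda>t. indicator {p<..<1} t * quantile M X t))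
                     (ext_integral lborel (\<lambda>t. indicator {p<..<1} t * quantile M Y t))))
       \<and> (dagger_cx M X Y \<longleftrightarrow>
          (\<forall>w::real.
             conv_le (enn2ereal (\<integral>\<^sup>+ \<omega>. ennreal (max (-(X \<omega> - w)) 0) \<partial>M))
                     (enn2ereal (\<integral>\<^sup>+ \<omega>. ennreal (max (-(Y \<omega> - w)) 0) \<partial>M)) \<and>
             conv_le (enn2ereal (\<integral>\<^sup>+ \<omega>. ennreal (max (X \<omega> - w) 0) \<partial>M))
                     (enn2ereal (\<integral>\<^sup>+ \<omega>. ennreal (max (Y \<omega> - w) 0) \<partial>M))))"
proof -
  note P = assms(1) and mX[measurable] = assms(3) and mY[measurable] = assms(4)
  let ?qX = "quantile M X" and ?qY = "quantile M Y"
  have mqX: "mono_on {0<..<1} ?qX" by (rule quantile_mono[OF P mX])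
  have mqY: "mono_on {0<..<1} ?qY" by (rule quantile_mono[OF P mY])
  have phi: "(\<integral>\<^sup>+\<omega>. ennreal (max (Z \<omega> - w) 0) \<partial>M) = Phi (quantile M Z) w"
    if [measurable]: "Z \<in> borel_measurable M" for Z w
  proof -
    have "(\<integral>\<^sup>+\<omega>. ennreal (max (Z \<omega> - w) 0) \<partial>M) =
          (\<integral>\<^sup>+t. ennreal (max (quantile M Z t - w) 0) * indicator {0<..<1} t \<partial>lborel)"
      by (rule quantile_transfer[OF P that, where g="\<lambda>x. ennreal (max (x - w) 0)"]) measurable
    also have "\<dots> = Phi (quantile M Z) w" unfolding Phi_def
      by (simp add: ennreal_max_0 max.commute)
    finally show ?thesis .
  qed
  have psi: "(\<integral>\<^sup>+\<omega>. ennreal (max (- (Z \<omega> - w)) 0) \<partial>M) = Psi (quantile M Z) w"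
    if [measurable]: "Z \<in> borel_measurable M" for Z w
  proof -
    have "(\<integral>\<^sup>+\<omega>. ennreal (max (- (Z \<omega> - w)) 0) \<partial>M) =
          (\<integral>\<^sup>+t. ennreal (max (- (quantile M Z t - w)) 0) * indicator {0<..<1} t \<partial>lborel)"
      by (rule quantile_transfer[OF P that, where g="\<lambda>x. ennreal (max (- (x - w)) 0)"]) measurable
    also have "\<dots> = Psi (quantile M Z) w" unfolding Psi_def
    proof (intro nn_integral_cong)
      fix t show "ennreal (max (- (quantile M Z t - w)) 0) * indicator {0<..<1} t = ennreal (w - quantile M Z t) * indicator {0<..<1} t"
        using ennreal_max_0[of "w - quantile M Z t"] by (simp add: max.commute)
    qed
    finally show ?thesis .
  qed
  define iii where "iii \<longleftrightarrow> (\<forall>w::real.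
             conv_le (enn2ereal (\<integral>\<^sup>+ \<omega>. ennreal (max (-(X \<omega> - w)) 0) \<partial>M))
                     (enn2ereal (\<integral>\<^sup>+ \<omega>. ennreal (max (-(Y \<omega> - w)) 0) \<partial>M)) \<and>
             conv_le (enn2ereal (\<integral>\<^sup>+ \<omega>. ennreal (max (X \<omega> - w) 0) \<partial>M))
                     (enn2ereal (\<integral>\<^sup>+ \<omega>. ennreal (max (Y \<omega> - w) 0) \<partial>M)))"
  define ii where "ii \<longleftrightarrow> (\<forall>p::real. 0 < p \<and> p < 1 \<longrightarrow>
             conv_le (ext_integral lborel (\<lambda>t. indicator {0<..<p} t * quantile M Y t))
                     (ext_integral lborel (\<lambda>t. indicator {0<..<p} t * quantile M X t)) \<and>
             conv_le (ext_integral lborel (\<lambda>t. indicator {p<..<1} t * quantile M X t))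
                     (ext_integral lborel (\<lambda>t. indicator {p<..<1} t * quantile M Y t)))"
  have iii_q: "iii \<longleftrightarrow> (\<forall>w. conv_le (enn2ereal (Psi ?qX w)) (enn2ereal (Psi ?qY w))) \<and>
                      (\<forall>w. conv_le (enn2ereal (Phi ?qX w)) (enn2ereal (Phi ?qY w)))"
    unfolding iii_def phi[OF mX] phi[OF mY] psi[OF mX] psi[OF mY] by blast
  have ii_q: "ii \<longleftrightarrow> (\<forall>p. 0 < p \<and> p < 1 \<longrightarrow> conv_le (Aq ?qY p) (Aq ?qX p)) \<and>
                    (\<forall>p. 0 < p \<and> p < 1 \<longrightarrow> conv_le (Bq ?qX p) (Bq ?qY p))"
    unfolding ii_def Aq_def Bq_def by blast
  have ii_iii: "ii \<longleftrightarrow> iii"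
    unfolding ii_q iii_q core_A[OF mqX mqY] core_B[OF mqX mqY] ..
  have i_iii: "dagger_cx M X Y \<longleftrightarrow> iii"
  proof
    assume D: "dagger_cx M X Y"
    show iii unfolding iii_def conv_le_enn
    proof
      fix w
      show "((\<integral>\<^sup>+\<omega>. ennreal (max (- (X \<omega> - w)) 0) \<partial>M) = \<top> \<or>
            (\<integral>\<^sup>+\<omega>. ennreal (max (- (X \<omega> - w)) 0) \<partial>M) \<le> (\<integral>\<^sup>+\<omega>. ennreal (max (- (Y \<omega> - w)) 0) \<partial>M)) \<and>
            ((\<integral>\<^sup>+\<omega>. ennreal (max (X \<omega> - w) 0) \<partial>M) = \<top> \<or>
            (\<integral>\<^sup>+\<omega>. ennreal (max (X \<omega> - w) 0) \<partial>M) \<le> (\<integral>\<^sup>+\<omega>. ennreal (max (Y \<omega> - w) 0) \<partial>M))"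
        using dag_nonneg[OF P mX mY D convex_hinge_neg[of w]] dag_nonneg[OF P mX mY D convex_hinge_pos[of w]]
        by simp
    qed
  next
    assume H: iii
    have Hp: "(\<integral>\<^sup>+\<omega>. ennreal (max (X \<omega> - w) 0) \<partial>M) = \<top> \<or>
              (\<integral>\<^sup>+\<omega>. ennreal (max (X \<omega> - w) 0) \<partial>M) \<le> (\<integral>\<^sup>+\<omega>. ennreal (max (Y \<omega> - w) 0) \<partial>M)" for w
      using H unfolding iii_def conv_le_enn by blast
    have Hm: "(\<integral>\<^sup>+\<omega>. ennreal (max (- (X \<omega> - w)) 0) \<partial>M) = \<top> \<or>
              (\<integral>\<^sup>+\<omega>. ennreal (max (- (X \<omega> - w)) 0) \<partial>M) \<le> (\<integral>\<^sup>+\<omega>. ennreal (max (- (Y \<omega> - w)) 0) \<partial>M)" for w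
      using H unfolding iii_def conv_le_enn by blast
    show "dagger_cx M X Y" unfolding dagger_cx_def
    proof (intro allI impI)
      fix u :: "real \<Rightarrow> real"
      assume "convex_on UNIV u" "integrable M (\<lambda>\<omega>. u (X \<omega>))" "integrable M (\<lambda>\<omega>. u (Y \<omega>))"
      then show "(\<integral>\<omega>. u (X \<omega>) \<partial>M) \<le> (\<integral>\<omega>. u (Y \<omega>) \<partial>M)"
        using cx_general[OF P mX mY _ _ _ Hp Hm] by blast
    qed
  qed
  show ?thesis
    using i_iii ii_iii unfolding ii_def iii_def by blast
qed

end
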